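(* Let $$ \eta_u A^{(u)} = \left[\begin{array}{cccccc} \tau_1^2+\tau_s^2+\tau_c^2 & 2\tau_1\tau_s & 2\tau_1\tau_c & 2\tau_c\tau_s & 0 & 0\\ 2\tau_1\tau_s & \tau_1^2+\tau_s^2+\tau_c^2 & 2\tau_c\tau_s & 2\tau_1\tau_c & 0 & 0\\ 2\tau_1\tau_c & 2\tau_c\tau_s & \tau_1^2+\tau_s^2+\tau_c^2 & 2\tau_1\tau_s & 0 & 0\\ 2\tau_c\tau_s & 2\tau_1\tau_c & 2\tau_1\tau_s & \tau_1^2+\tau_s^2+\tau_c^2 & 0 & 0\\ 0 & 0 & 0 & 0 & 2\tau_1^2 & 2\tau_1^2\\ 0 & 0 & 0 & 0 & 2\tau_1^2 & 2\tau_1^2 \end{array}\right],$$ $$ A = \eta_u A^{(u)} + \left[\begin{array}{cccccc} (\tau_1+\tau_s)^2 & (\tau_1+\tau_s)^2 & \tau_c(\tau_1+\tau_s) & \tau_c(\tau_1+\tau_s) & 0 & 0\\ (\tau_1+\tau_s)^2 & (\tau_1+\tau_s)^2 & \tau_c(\tau_1+\tau_s) & \tau_c(\tau_1+\tau_s) & 0 & 0\\ \tau_c(\tau_1+\tau_s) & \tau_c(\tau_1+\tau_s) & \tau_c^2 & \tau_c^2 & 0 & 0\\ \tau_c(\tau_1+\tau_s) & \tau_c(\tau_1+\tau_s) & \tau_c^2 & \tau_c^2 & 0 & 0\\ 0 & 0 & 0 & 0 & 0 & 0\\ 0 & 0 & 0 & 0 & 0 & 0 \end{array}\right],$$ and assume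 $1 \gg \frac{\tau_c}{\tau_1} > \frac{\tau_s}{\tau_1} > 0$, $\frac{4}{9}\tau_c \le \tau_s \le \tau_c$ and $\tau_1+\tau_c+\tau_s = 1$. Let $D$ be the diagonal matrix with $D_{xx} = \sum_{x'} A_{xx'}$, and let $\lambda_1,\lambda_2,\lambda_3$ and $v_1,v_2,v_3$ be the largest three eigenvalues and corresponding eigenvectors of the normalized adjacency matrix $D^{-1/2} A D^{-1/2}$. Define $$\hat\lambda_1 = 1,\quad \hat\lambda_2 = 1,\quad \hat\lambda_3 = 1 - \frac{16}{3}\frac{\tau_c}{\tau_1},$$ $$\hat v_1 = [0,0,0,0,1,1],\quad \hat v_2 = [\sqrt{3},\sqrt{3},1,1,0,0],\quad \hat v_3 = [1,1,-\sqrt{3},-\sqrt{3},0,0].$$ Let $U = [v_1,v_2,v_3]$ and $\hat U = [\hat v_1,\hat v_2,\hat v_3]$. Then for $i\in\{1,2,3\}$, $|\lambda_i - \hat\lambda_i| \le O\big((\tfrac{\tau_c}{\tau_1})^2\big)$ and $\|\sin(U,\hat U)\|_F \le O\big(\tfrac{\tau_c}{\tau_1}\big)$, where $\sin(U,\hat U)$ denotes the matrix of sines of the principal angles between the column subspaces of $U$ and $\hat U$ (subspace distance between matrices with orthonormal columns).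
   Context: Toy example: six data points (nodes) — a red cube and a blue cube (known class, labeled), a red sphere and a blue sphere (novel class), and two gray cylinders (novel class). The augmentation probability $\mathcal{T}(x\mid\bar x)$ equals $\tau_1$ if $x$ and $\bar x$ share both color and shape, $\tau_c$ if they share color but not shape, $\tau_s$ if they share shape but not color, and $\tau_0 = 0$ otherwise. The unlabeled adjacency is $A^{(u)}_{xx'} = \mathbb{E}_{\bar x}\mathcal{T}(x\mid\bar x)\mathcal{T}(x'\mid\bar x)$ (with $\eta_u = 6$), and the label perturbation is $\eta_l \mathfrak{l}\mathfrak{l}^{\top}$ with $\eta_l = 4$ and $\mathfrak{l}_x = \mathbb{E}_{\bar x_l}\mathcal{T}(x\mid\bar x_l)$ averaged over the two labeled cubes, giving the second matrix above. *)

theory Defs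
  imports Complex_Main
begin

text \<open>6x6 real matrices are represented as functions nat => nat => real on indices {0..<6};
vectors as nat => real on {0..<6}.\<close>

definition mat_of_list :: "real list list \<Rightarrow> nat \<Rightarrow> nat \<Rightarrow> real" where
  "mat_of_list rows i j = rows ! i ! j"

definition vec_of_list :: "real list \<Rightarrow> nat \<Rightarrow> real" where
  "vec_of_list xs i = xs ! i"

definition Au_scaled :: "real \<Rightarrow> real \<Rightarrow> real \<Rightarrow> nat \<Rightarrow> nat \<Rightarrow> real" where
  "Au_scaled t1 tc ts = (let a = t1^2 + ts^2 + tc^2; b = 2*t1*ts; c = 2*t1*tc; d = 2*tc*ts;
      e = 2*t1^2 in
    mat_of_list
     [[a, b, c, d, 0, 0],
      [b, a, d, c, 0, 0],
      [c, d, a, b, 0, 0],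
      [d, c, b, a, 0, 0],
      [0, 0, 0, 0, e, e],
      [0, 0, 0, 0, e, e]])"

text \<open>The label perturbation eta_l l l^T.\<close>
definition Al_scaled :: "real \<Rightarrow> real \<Rightarrow> real \<Rightarrow> nat \<Rightarrow> nat \<Rightarrow> real" where
  "Al_scaled t1 tc ts = (let p = (t1 + ts)^2; q = tc * (t1 + ts); r = tc^2 in
    mat_of_list
     [[p, p, q, q, 0, 0],
      [p, p, q, q, 0, 0],
      [q, q, r, r, 0, 0],
      [q, q, r, r, 0, 0],
      [0, 0, 0, 0, 0, 0],
      [0, 0, 0, 0, 0, 0]])"

definition adjA :: "real \<Rightarrow> real \<Rightarrow> real \<Rightarrow> nat \<Rightarrow> nat \<Rightarrow> real" where
  "adjA t1 tc ts i j = Au_scaled t1 tc ts i j + Al_scaled t1 tc ts i j"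

definition degA :: "real \<Rightarrow> real \<Rightarrow> real \<Rightarrow> nat \<Rightarrow> real" where
  "degA t1 tc ts i = (\<Sum>j<6. adjA t1 tc ts i j)"

definition normA :: "real \<Rightarrow> real \<Rightarrow> real \<Rightarrow> nat \<Rightarrow> nat \<Rightarrow> real" where
  "normA t1 tc ts i j =
     adjA t1 tc ts i j / (sqrt (degA t1 tc ts i) * sqrt (degA t1 tc ts j))"

text \<open>Then lam 0, lam 1, lam 2 are the largest three eigenvalues and v 0, v 1, v 2 corresponding
eigenvectors.\<close>
definition sorted_orthonormal_eigenbasis ::
  "(nat \<Rightarrow> nat \<Rightarrow> real) \<Rightarrow> (nat \<Rightarrow> real) \<Rightarrow> (nat \<Rightarrow> nat \<Rightarrow> real) \<Rightarrow> bool" where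
  "sorted_orthonormal_eigenbasis M lam v \<longleftrightarrow>
     (\<forall>k<6. \<forall>l<6. (\<Sum>i<6. v k i * v l i) = (if k = l then 1 else 0)) \<and>
     (\<forall>k<6. \<forall>i<6. (\<Sum>j<6. M i j * v k j) = lam k * v k i) \<and>
     (\<forall>k<5. lam (Suc k) \<le> lam k)"

definition vnorm6 :: "(nat \<Rightarrow> real) \<Rightarrow> real" where
  "vnorm6 x = sqrt (\<Sum>i<6. x i ^ 2)"

text \<open>Frobenius norm of sin(U, W) for U = [u_0,..,u_{k-1}] with orthonormal columns and
W = [w_0,..,w_{k-1}] with nonzero, mutually orthogonal columns: with Q the column-normalization
of W, the cosines of the principal angles are the singular values of U^T Q, hence
||sin Theta||_F^2 = sum_i (1 - cos^2 theta_i) = k - ||U^T Q||_F^2.\<close>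
definition sin_theta_frob :: "nat \<Rightarrow> (nat \<Rightarrow> nat \<Rightarrow> real) \<Rightarrow> (nat \<Rightarrow> nat \<Rightarrow> real) \<Rightarrow> real" where
  "sin_theta_frob k u w =
     sqrt (real k - (\<Sum>a<k. \<Sum>b<k. ((\<Sum>i<6. u a i * w b i) / vnorm6 (w b)) ^ 2))"

definition lam_hat :: "real \<Rightarrow> real \<Rightarrow> nat \<Rightarrow> real" where
  "lam_hat t1 tc k = (if k = 2 then 1 - 16/3 * (tc / t1) else 1)"

definition v_hat :: "nat \<Rightarrow> nat \<Rightarrow> real" where
  "v_hat k = (if k = 0 then vec_of_list [0, 0, 0, 0, 1, 1]
              else if k = 1 then vec_of_list [sqrt 3, sqrt 3, 1, 1, 0, 0]
              else vec_of_list [1, 1, - sqrt 3, - sqrt 3, 0, 0])"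

end

theory Submission
  imports Defs "Jordan_Normal_Form.Determinant"
begin

lemma sum6: "(\<Sum>i<(6::nat). f i) = f 0 + f 1 + f 2 + f 3 + f 4 + (f 5::real)"
  by (simp add: eval_nat_numeral)
lemma less6: "(i::nat) < 6 \<longleftrightarrow> i = 0 \<or> i = 1 \<or> i = 2 \<or> i = 3 \<or> i = 4 \<or> i = 5"
  by auto

lemma transfer:
  fixes A :: "nat \<Rightarrow> nat \<Rightarrow> real"
  assumes s: "\<forall>i<6. s i > 0" and u: "\<forall>j<6. u j = s j * k j / \<rho>"
    and c: "\<forall>i<6. (\<Sum>j<6. A i j * k j) = \<mu> * (s i * s i) * k i"
    and i: "i < 6"
  shows "(\<Sum>j<6. A i j / (s i * s j) * u j) = \<mu> * u i"
proof -
  have "(\<Sum>j<6. A i j / (s i * s j) * u j) = (\<Sum>j<6. A i j * k j) / (s i * \<rho>)"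
    unfolding sum_divide_distrib
    by (rule sum.cong) (use s u i in auto)
  also have "\<dots> = \<mu> * u i" using c i s u by auto
  finally show ?thesis .
qed

lemmas adj_simps = adjA_def Au_scaled_def Al_scaled_def Defs.mat_of_list_def Let_def



lemma complete6:
  fixes v :: "nat \<Rightarrow> nat \<Rightarrow> real"
  assumes orth: "\<forall>k<6. \<forall>l<6. (\<Sum>i<6. v k i * v l i) = (if k = l then 1 else 0)"
    and i: "i < 6" and j: "j < 6"
  shows "(\<Sum>k<6. v k i * v k j) = (if i = j then 1 else 0)"
proof -
  define A :: "real mat" where "A = mat 6 6 (\<lambda>(k,i). v k i)"
  have Ac: "A \<in> carrier_mat 6 6" by (simp add: A_def)
  have Bc: "transpose_mat A \<in> carrier_mat 6 6" by (simp add: A_def)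
  have "A * transpose_mat A = 1\<^sub>m 6"
  proof (rule eq_matI)
    fix k l assume k: "k < dim_row (1\<^sub>m 6 :: real mat)" and l: "l < dim_col (1\<^sub>m 6 :: real mat)"
    then have "(A * transpose_mat A) $$ (k, l) = (\<Sum>i<6. v k i * v l i)"
      by (simp add: A_def scalar_prod_def lessThan_atLeast0)
    also have "\<dots> = 1\<^sub>m 6 $$ (k, l)" using orth k l by simp
    finally show "(A * transpose_mat A) $$ (k, l) = 1\<^sub>m 6 $$ (k, l)" .
  qed (simp_all add: A_def)
  then have "transpose_mat A * A = 1\<^sub>m 6" using mat_mult_left_right_inverse[OF Ac Bc] by blast
  then have "(transpose_mat A * A) $$ (i, j) = (1\<^sub>m 6 :: real mat) $$ (i, j)" by simp
  moreover have "(transpose_mat A * A) $$ (i, j) = (\<Sum>k<6. v k i * v k j)"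
    using i j by (simp add: A_def scalar_prod_def lessThan_atLeast0)
  ultimately show ?thesis using i j by simp
qed

definition ip :: "(nat \<Rightarrow> real) \<Rightarrow> (nat \<Rightarrow> real) \<Rightarrow> real" where
  "ip x y = (\<Sum>i<6. x i * y i)"

lemma parseval6:
  fixes v :: "nat \<Rightarrow> nat \<Rightarrow> real"
  assumes orth: "\<forall>k<6. \<forall>l<6. (\<Sum>i<6. v k i * v l i) = (if k = l then 1 else 0)"
  shows "(\<Sum>k<6. (ip (v k) x)^2) = ip x x"
proof -
  have "(\<Sum>k<6. (ip (v k) x)^2) = (\<Sum>k<6. \<Sum>i<6. \<Sum>j<6. (v k i * x i) * (v k j * x j))"
    unfolding ip_def power2_eq_square sum_product by simp
  also have "\<dots> = (\<Sum>i<6. \<Sum>k<6. \<Sum>j<6. (v k i * x i) * (v k j * x j))"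
    by (rule sum.swap)
  also have "\<dots> = (\<Sum>i<6. \<Sum>j<6. \<Sum>k<6. (v k i * x i) * (v k j * x j))"
    by (rule sum.cong[OF refl], rule sum.swap)
  also have "\<dots> = (\<Sum>i<6. \<Sum>j<6. x i * x j * (\<Sum>k<6. v k i * v k j))"
    unfolding sum_distrib_left by (intro sum.cong refl) (simp add: algebra_simps)
  also have "\<dots> = (\<Sum>i<6. \<Sum>j<6. x i * x j * (if i = j then 1 else 0))"
    using complete6[OF orth] by (intro sum.cong refl) auto
  also have "\<dots> = (\<Sum>i<6. x i * x i)"
  proof (intro sum.cong refl)
    fix i :: nat assume "i \<in> {..<6}"
    have "(\<Sum>j<6. x i * x j * (if i = j then 1 else 0)) = (\<Sum>j<6. if i = j then x i * x j else 0)"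
      by (intro sum.cong) auto
    then show "(\<Sum>j<6. x i * x j * (if i = j then 1 else 0)) = x i * x i"
      using \<open>i \<in> {..<6}\<close> by simp
  qed
  finally show ?thesis by (simp add: ip_def)
qed

lemma sym_orth:
  fixes N :: "nat \<Rightarrow> nat \<Rightarrow> real"
  assumes sym: "\<And>i j. i < 6 \<Longrightarrow> j < 6 \<Longrightarrow> N i j = N j i"
    and eu: "\<And>i. i < 6 \<Longrightarrow> (\<Sum>j<6. N i j * u j) = \<mu> * u i"
    and ew: "\<And>i. i < 6 \<Longrightarrow> (\<Sum>j<6. N i j * w j) = lm * w i"
    and ne: "lm \<noteq> \<mu>"
  shows "ip u w = 0"
proof -
  have "lm * ip u w = (\<Sum>i<6. u i * (lm * w i))"
    unfolding ip_def sum_distrib_left by (simp add: algebra_simps)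
  also have "\<dots> = (\<Sum>i<6. u i * (\<Sum>j<6. N i j * w j))"
    by (intro sum.cong refl) (simp add: ew)
  also have "\<dots> = (\<Sum>i<6. \<Sum>j<6. u i * N i j * w j)"
    by (simp add: sum_distrib_left mult.assoc)
  also have "\<dots> = (\<Sum>j<6. \<Sum>i<6. u i * N i j * w j)"
    by (rule sum.swap)
  also have "\<dots> = (\<Sum>j<6. w j * (\<Sum>i<6. N j i * u i))"
    unfolding sum_distrib_left by (intro sum.cong refl) (simp add: sym algebra_simps)
  also have "\<dots> = (\<Sum>j<6. w j * (\<mu> * u j))"
    by (intro sum.cong refl) (simp add: eu)
  also have "\<dots> = \<mu> * ip u w"
    unfolding ip_def sum_distrib_left by (simp add: algebra_simps)
  finally have "(lm - \<mu>) * ip u w = 0" by (simp add: algebra_simps)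
  then show ?thesis using ne by simp
qed


lemma mono_facts:
  fixes c s :: real
  assumes c0: "0 < c" and c1: "c < 1/100" and s0: "4/9*c \<le> s" and s1: "s \<le> c"
  shows "s > 0" "s*s \<le> c*c" "c*c \<le> c/100" "c*s \<le> c*c" "c*s*s \<le> c*c*c" "c*c*s \<le> c*c*c"
    "c*c*c \<le> c*c" "0 \<le> c*s" "0 \<le> c*c*s" "0 \<le> c*c*s*s" "0 \<le> c*c*c*s" "0 \<le> c*c*c*c"
    "0 \<le> s*s" "0 \<le> c*c" "0 \<le> c*c*c" "0 \<le> c*s*s"
proof -
  show sp: "s > 0" using c0 s0 by simp
  show m1: "s*s \<le> c*c" using s1 sp by (simp add: mult_mono)
  show "c*c \<le> c/100" using c0 c1 by (simp add: mult_strict_left_mono less_imp_le)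
  show m3: "c*s \<le> c*c" using s1 c0 by simp
  show "c*s*s \<le> c*c*c" using m1 c0 by (simp add: mult.assoc)
  show "c*c*s \<le> c*c*c" using m3 c0 by (simp add: mult.assoc)
  show "c*c*c \<le> c*c" using c0 c1 by simp
  show "0 \<le> c*s" "0 \<le> c*c*s" "0 \<le> c*c*s*s" "0 \<le> c*c*c*s" "0 \<le> c*c*c*c"
    "0 \<le> s*s" "0 \<le> c*c" "0 \<le> c*c*c" "0 \<le> c*s*s" using c0 sp by simp_all
qed

lemma den_pos:
  fixes c :: real
  assumes c0: "0 < c" and c1: "c < 1/100"
  shows "3+4*c-4*c^2 > 0"
proof -
  have "c*c \<le> c/100" using c0 c1 by (simp add: mult_strict_left_mono less_imp_le)
  then show ?thesis unfolding power2_eq_square using c0 by linarith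
qed

lemma ineq_y:
  fixes c s :: real
  assumes c0: "0 < c" and c1: "c < 1/100" and s0: "4/9*c \<le> s" and s1: "s \<le> c"
  shows "((1-c-2*s)^2+c^2)/(1+2*c) + c/10 \<le> 3*(1-2*c)^2/(3+4*c-4*c^2)"
proof -
  note m = mono_facts[OF assms]
  have den: "3+4*c-4*c^2 > 0" using den_pos c0 c1 by blast
  have poly: "0 \<le> 12*s - 12*s*s - 43/10*c + 4*c*s - 16*c*s*s - 7*c*c - 32*c*c*s + 16*c*c*s*s + 38/5*c*c*c + 16*c*c*c*s + 44/5*c*c*c*c"
    using m s0 c0 by linarith
  show ?thesis using den c0 poly
    by (simp add: field_simps power2_eq_square)
qed

lemma ineq_x:
  fixes c s :: real
  assumes c0: "0 < c" and c1: "c < 1/100" and s0: "4/9*c \<le> s" and s1: "s \<le> c"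
  shows "((1-c-2*s)^2+c^2)/(3-2*c) + 1/2 \<le> 3*(1-2*c)^2/(3+4*c-4*c^2)"
proof -
  note m = mono_facts[OF assms]
  have den: "3+4*c-4*c^2 > 0" using den_pos c0 c1 by blast
  have den2: "3 - 2*c > 0" using c1 by simp
  have poly: "0 \<le> 3/2 + 12*s - 12*s*s - 43*c + 4*c*s - 16*c*s*s + 76*c*c - 32*c*c*s + 16*c*c*s*s - 44*c*c*c + 16*c*c*c*s + 8*c*c*c*c"
    using m s0 s1 c0 c1 by linarith
  show ?thesis using den den2 c0 poly
    by (simp add: field_simps power2_eq_square)
qed

lemma ineq_z:
  fixes c s :: real
  assumes c0: "0 < c" and c1: "c < 1/100" and s0: "4/9*c \<le> s" and s1: "s \<le> c"
  shows "4*c^2*(1-c-2*s)^2/((3-2*c)*(1+2*c)) \<le> 2*c^2"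
proof -
  have a: "(1-c-2*s)^2 \<le> 1" using assms by (simp add: power_le_one abs_le_iff power2_le_iff_abs_le)
  have cc: "c*c \<le> c/100" using c0 c1 by (simp add: mult_strict_left_mono less_imp_le)
  have "(3-2*c)*(1+2*c) = 3 + 4*c - 4*(c*c)" by (simp add: algebra_simps)
  then have b: "(3-2*c)*(1+2*c) \<ge> 2" using c0 c1 cc by linarith
  have "4*c^2*(1-c-2*s)^2 \<le> 4*c^2*1" using a c0 by (simp add: mult_left_mono)
  then have "4*c^2*(1-c-2*s)^2/((3-2*c)*(1+2*c)) \<le> 4*c^2/2"
    using b c0 by (smt (verit) divide_left_mono divide_right_mono mult_pos_pos zero_less_power)
  then show ?thesis by simp
qed

lemma mus_bounds:
  fixes c :: real
  assumes c0: "0 < c" and c1: "c < 1/100"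
  shows "0 < 3*(1-2*c)^2/(3+4*c-4*c^2)" "3*(1-2*c)^2/(3+4*c-4*c^2) < 1"
    "\<bar>3*(1-2*c)^2/(3+4*c-4*c^2) - (1 - 16/3*c)\<bar> \<le> 13*c^2"
proof -
  have den: "3+4*c-4*c^2 > 0" using den_pos c0 c1 by blast
  have cc: "c*c \<le> c/100" using c0 c1 by (simp add: mult_strict_left_mono less_imp_le)
  show "0 < 3*(1-2*c)^2/(3+4*c-4*c^2)" using den c1 by simp
  have "3*(1-2*c)^2 < 3+4*c-4*c^2" unfolding power2_eq_square using c0 cc by (simp add: algebra_simps)
  then show "3*(1-2*c)^2/(3+4*c-4*c^2) < 1" using den by (simp add: divide_less_eq_1_pos)
  have eq: "3*(1-2*c)^2/(3+4*c-4*c^2) - (1 - 16/3*c) = (112*c^2 - 64*c^3)/(3*(3+4*c-4*c^2))"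
    using den by (simp add: field_simps power2_eq_square power3_eq_cube)
  have n0: "0 \<le> 112*c^2 - 64*c^3"
  proof -
    have "112*c^2 - 64*c^3 = c^2*(112 - 64*c)" by (simp add: algebra_simps power2_eq_square power3_eq_cube)
    moreover have "0 \<le> c^2*(112 - 64*c)" using c1 by simp
    ultimately show ?thesis by simp
  qed
  have c4: "c*c*c*c \<le> c*c*c" using c0 c1 by simp
  have "13*c^2*(3*(3+4*c-4*c^2)) - (112*c^2 - 64*c^3) = 5*(c*c) + 220*(c*c*c) - 156*(c*c*c*c)"
    by (simp add: algebra_simps power2_eq_square power3_eq_cube)
  moreover have "0 \<le> c*c" "0 \<le> c*c*c" using c0 by simp_all
  ultimately have "112*c^2 - 64*c^3 \<le> 13*c^2*(3*(3+4*c-4*c^2))" using c4 by linarith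
  then have "(112*c^2 - 64*c^3)/(3*(3+4*c-4*c^2)) \<le> 13*c^2"
    using den by (simp add: pos_divide_le_eq)
  then show "\<bar>3*(1-2*c)^2/(3+4*c-4*c^2) - (1 - 16/3*c)\<bar> \<le> 13*c^2"
    using eq n0 den by simp
qed
context
  fixes t1 tc ts :: real
  assumes t1: "t1 > 0" and tcp: "tc > 0" and tsp: "ts > 0" and sum1: "t1 + tc + ts = 1"
    and c1: "tc < 1/100" and s0: "4/9*tc \<le> ts" and s1: "ts \<le> tc"
begin

definition "d1 = 1 + 2*(t1+ts)"
definition "d3 = 1 + 2*tc"

lemma deg0: "degA t1 tc ts 0 = d1" "degA t1 tc ts 1 = d1"
  "degA t1 tc ts 2 = d3" "degA t1 tc ts 3 = d3"
  "degA t1 tc ts 4 = 4*t1^2" "degA t1 tc ts 5 = 4*t1^2"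
proof -
  have e: "t1 = 1 - tc - ts" using sum1 by simp
  show "degA t1 tc ts 0 = d1" "degA t1 tc ts 1 = d1"
  "degA t1 tc ts 2 = d3" "degA t1 tc ts 3 = d3"
  "degA t1 tc ts 4 = 4*t1^2" "degA t1 tc ts 5 = 4*t1^2"
    unfolding degA_def sum6 d1_def d3_def
    by (simp_all add: adj_simps e power2_eq_square algebra_simps)
qed

lemma d1pos: "d1 > 0" using t1 tsp tcp by (simp add: d1_def)
lemma d3pos: "d3 > 0" using tcp t1 tsp by (simp add: d3_def)
lemma deg1': "degA t1 tc ts (Suc 0) = d1" using deg0 by simp
lemma dsum: "d1 + d3 = 4" using sum1 by (simp add: d1_def d3_def)

definition "r0 = sqrt d1"
definition "r2 = sqrt d3"

lemma r0sq: "r0 * r0 = d1" using d1pos by (simp add: r0_def)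
lemma r2sq: "r2 * r2 = d3" using d3pos by (simp add: r2_def)
lemma r0pos: "r0 > 0" using d1pos by (simp add: r0_def)
lemma r2pos: "r2 > 0" using d3pos by (simp add: r2_def)
lemma sq4: "sqrt (4*t1^2) = 2*t1" using t1
  by (simp add: real_sqrt_mult)

lemma sdeg1: "sqrt (degA t1 tc ts (Suc 0)) = r0"
  using deg0 by (simp_all add: r0_def)

lemma sdeg: "sqrt (degA t1 tc ts 0) = r0" "sqrt (degA t1 tc ts 1) = r0"
  "sqrt (degA t1 tc ts 2) = r2" "sqrt (degA t1 tc ts 3) = r2"
  "sqrt (degA t1 tc ts 4) = 2*t1" "sqrt (degA t1 tc ts 5) = 2*t1"
  by (simp_all only: deg0 sq4 r0_def r2_def)

definition N where "N = normA t1 tc ts"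
definition sd where "sd i = sqrt (degA t1 tc ts i)"
lemma Nsd: "N i j = adjA t1 tc ts i j / (sd i * sd j)" by (simp add: N_def normA_def sd_def)
lemma sdpos: "\<forall>i<6. sd i > 0"
  using d1pos d3pos t1 by (auto simp: less6 sd_def deg0 deg1')
lemma sdsq: "sd i * sd i = degA t1 tc ts i" if "i < 6" for i
  using sdpos that by (auto simp: sd_def)


lemma Nsym: "i < 6 \<Longrightarrow> j < 6 \<Longrightarrow> N i j = N j i"
  unfolding N_def normA_def less6
  by (elim disjE; simp add: adj_simps mult.commute)

definition U :: "nat \<Rightarrow> nat \<Rightarrow> real" where
  "U k = (if k = 0 then Defs.vec_of_list [0,0,0,0,1,1]
     else if k = 1 then Defs.vec_of_list [0,0,0,0,1,-1]
     else if k = 2 then Defs.vec_of_list [r0,r0,r2,r2,0,0]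
     else if k = 3 then Defs.vec_of_list [r2,r2,-r0,-r0,0,0]
     else if k = 4 then Defs.vec_of_list [1,-1,0,0,0,0]
     else Defs.vec_of_list [0,0,1,-1,0,0])"

lemma eig0: "i < 6 \<Longrightarrow> (\<Sum>j<6. N i j * U 0 j) = 1 * U 0 i"
  unfolding N_def normA_def less6 sum6
  using t1 by (elim disjE; simp add: adj_simps sdeg sdeg1 U_def Defs.vec_of_list_def power2_eq_square field_simps)

lemma eig1: "i < 6 \<Longrightarrow> (\<Sum>j<6. N i j * U 1 j) = 0 * U 1 i"
  unfolding N_def normA_def less6 sum6
  using t1 by (elim disjE; simp add: adj_simps sdeg sdeg1 U_def Defs.vec_of_list_def power2_eq_square field_simps)


definition "xa = ((t1-ts)^2 + tc^2)/d1"
definition "ya = ((t1-ts)^2 + tc^2)/d3"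
definition "za = 2*tc*(t1-ts)/(r0*r2)"

lemma anti1: "(\<Sum>j<6. N 0 j * w j) - (\<Sum>j<6. N 1 j * w j) = xa * (w 0 - w 1) + za * (w 2 - w 3)"
  unfolding N_def normA_def sum6 xa_def za_def
  using r0sq r2sq r0pos r2pos apply (simp add: adj_simps sdeg sdeg1 r0sq r2sq)
  using d1pos d3pos apply (simp add: field_simps)
  apply (simp add: algebra_simps power2_eq_square)
  done

lemma anti2: "(\<Sum>j<6. N 2 j * w j) - (\<Sum>j<6. N 3 j * w j) = za * (w 0 - w 1) + ya * (w 2 - w 3)"
  unfolding N_def normA_def sum6 ya_def za_def
  using r0sq r2sq r0pos r2pos apply (simp add: adj_simps sdeg sdeg1 r0sq r2sq)
  using d1pos d3pos apply (simp add: field_simps)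
  apply (simp add: algebra_simps power2_eq_square)
  done



definition "mus = ((adjA t1 tc ts 0 0 + adjA t1 tc ts 0 1) * d3 - (adjA t1 tc ts 0 2 + adjA t1 tc ts 0 3) * d1) / (d1 * d3)"

definition "k3 j = (if j < 2 then d3 else if j < 4 then - d1 else 0)"

lemma eig3: "i < 6 \<Longrightarrow> (\<Sum>j<6. N i j * U 3 j) = mus * U 3 i"
  unfolding Nsd
proof (rule transfer[OF sdpos, where k = k3 and \<rho> = "r0 * r2"])
  show "\<forall>j<6. U 3 j = sd j * k3 j / (r0 * r2)"
    using r0pos r2pos r0sq r2sq unfolding less6
    by (auto simp: U_def Defs.vec_of_list_def k3_def sd_def deg0 sdeg1 field_simps simp flip: r0_def r2_def)
  show "\<forall>i<6. (\<Sum>j<6. adjA t1 tc ts i j * k3 j) = mus * (sd i * sd i) * k3 i"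
  proof (intro allI impI)
    fix i :: nat assume i: "i < 6"
    have e: "ts = 1 - t1 - tc" using sum1 by simp
    show "(\<Sum>j<6. adjA t1 tc ts i j * k3 j) = mus * (sd i * sd i) * k3 i"
      unfolding sdsq[OF i] using i d1pos d3pos unfolding less6
      by (elim disjE; simp add: deg0 deg1' sum6 k3_def mus_def adj_simps d1_def d3_def; simp add: e field_simps; simp add: algebra_simps power2_eq_square)
  qed
qed

definition "k2 j = (if j < 4 then (1::real) else 0)"

lemma eig2: "i < 6 \<Longrightarrow> (\<Sum>j<6. N i j * U 2 j) = 1 * U 2 i"
  unfolding Nsd
proof (rule transfer[OF sdpos, where k = k2 and \<rho> = 1])
  show "\<forall>j<6. U 2 j = sd j * k2 j / 1"
    unfolding less6
    by (auto simp: U_def Defs.vec_of_list_def k2_def sd_def deg0 sdeg1 simp flip: r0_def r2_def)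
  show "\<forall>i<6. (\<Sum>j<6. adjA t1 tc ts i j * k2 j) = 1 * (sd i * sd i) * k2 i"
  proof (intro allI impI)
    fix i :: nat assume i: "i < 6"
    have e: "ts = 1 - t1 - tc" using sum1 by simp
    show "(\<Sum>j<6. adjA t1 tc ts i j * k2 j) = 1 * (sd i * sd i) * k2 i"
      unfolding sdsq[OF i] using i unfolding less6
      by (elim disjE; simp add: deg0 deg1' sum6 k2_def adj_simps d1_def d3_def; simp add: e algebra_simps power2_eq_square)
  qed
qed

lemma mus_closed: "mus = 3*(1-2*tc)^2/(3+4*tc-4*tc^2)"
proof -
  have e: "t1 = 1 - tc - ts" using sum1 by simp
  have den: "3+4*tc-4*tc^2 > 0" using den_pos tcp c1 by blast
  have d1e: "d1 = 3 - 2*tc" using sum1 unfolding d1_def by simp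
  have "d1 * d3 = 3+4*tc-4*tc^2" unfolding d1e d3_def by (simp add: algebra_simps power2_eq_square)
  moreover have "(adjA t1 tc ts 0 0 + adjA t1 tc ts 0 1) * d3 - (adjA t1 tc ts 0 2 + adjA t1 tc ts 0 3) * d1
      = 3*(1-2*tc)^2"
    unfolding d1e d3_def by (simp add: adj_simps e algebra_simps power2_eq_square)
  ultimately show ?thesis unfolding mus_def by simp
qed

lemma xa_closed: "xa = ((1-tc-2*ts)^2+tc^2)/(3-2*tc)"
  unfolding xa_def d1_def using sum1 by (smt (verit))
lemma ya_closed: "ya = ((1-tc-2*ts)^2+tc^2)/(1+2*tc)"
  unfolding ya_def d3_def using sum1 by (smt (verit))
lemma za_sq: "za^2 = 4*tc^2*(1-tc-2*ts)^2/((3-2*tc)*(1+2*tc))"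
proof -
  have "za^2 = (2*tc*(t1-ts))^2/((r0*r0)*(r2*r2))" unfolding za_def by (simp add: power2_eq_square algebra_simps)
  also have "\<dots> = 4*tc^2*(1-tc-2*ts)^2/((3-2*tc)*(1+2*tc))"
  proof -
    have a0: "t1 + ts = 1 - tc" using sum1 by linarith
    have a1: "1 + 2*(t1+ts) = 3 - 2*tc" unfolding a0 by simp
    have a2: "t1 - ts = 1 - tc - 2*ts" using sum1 by linarith
    note a = a1 a2
    show ?thesis unfolding r0sq r2sq d1_def d3_def a by (simp add: power_mult_distrib)
  qed
  finally show ?thesis .
qed

lemma mus_pos: "0 < mus" and mus_lt1: "mus < 1"
  using mus_bounds[OF tcp c1] mus_closed by auto

lemma mus_gt_xa: "xa + 1/2 \<le> mus"
  using ineq_x[OF tcp c1 s0 s1] xa_closed mus_closed by simp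
lemma mus_gt_ya: "ya + tc/10 \<le> mus"
  using ineq_y[OF tcp c1 s0 s1] ya_closed mus_closed by simp
lemma za_bound: "za^2 \<le> 2*tc^2"
  using ineq_z[OF tcp c1 s0 s1] za_sq by simp

lemma gap: "za^2 < (mus - xa) * (mus - ya)"
proof -
  have "(1/2) * (tc/10) \<le> (mus - xa) * (mus - ya)"
    using mus_gt_xa mus_gt_ya tcp by (intro mult_mono) auto
  moreover have "2*tc^2 < (1/2) * (tc/10)" using tcp c1 by (simp add: power2_eq_square)
  ultimately show ?thesis using za_bound by linarith
qed

lemma anti_zero:
  assumes e: "\<And>i. i < 6 \<Longrightarrow> (\<Sum>j<6. N i j * w j) = lm * w i" and l: "mus \<le> lm"
  shows "w 0 - w 1 = 0" "w 2 - w 3 = 0"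
proof -
  define \<alpha> where "\<alpha> = w 0 - w 1"
  define \<beta> where "\<beta> = w 2 - w 3"
  have h1: "lm * \<alpha> = xa * \<alpha> + za * \<beta>"
    using anti1[of w] e[of 0] e[of 1] unfolding \<alpha>_def \<beta>_def by (simp add: algebra_simps)
  have h2: "lm * \<beta> = za * \<alpha> + ya * \<beta>"
    using anti2[of w] e[of 2] e[of 3] unfolding \<alpha>_def \<beta>_def by (simp add: algebra_simps)
  have "(lm - xa) * \<alpha> = za * \<beta>" using h1 by (simp add: algebra_simps)
  moreover have "(lm - ya) * \<beta> = za * \<alpha>" using h2 by (simp add: algebra_simps)
  ultimately have "(lm - xa) * (lm - ya) * \<alpha> = za^2 * \<alpha>"
    by (metis (no_types, lifting) mult.assoc mult.left_commute power2_eq_square)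
  then have k: "((lm - xa) * (lm - ya) - za^2) * \<alpha> = 0" by (simp add: algebra_simps)
  have "(mus - xa) * (mus - ya) \<le> (lm - xa) * (lm - ya)"
    using l mus_gt_xa mus_gt_ya tcp by (intro mult_mono) auto
  then have "(lm - xa) * (lm - ya) - za^2 \<noteq> 0" using gap by linarith
  then have a0: "\<alpha> = 0" using k by simp
  then have "(lm - ya) * \<beta> = 0" using h2 by (simp add: algebra_simps)
  moreover have "lm - ya \<noteq> 0" using l mus_gt_ya tcp by linarith
  ultimately have "\<beta> = 0" by simp
  then show "w 0 - w 1 = 0" "w 2 - w 3 = 0" using a0 unfolding \<alpha>_def \<beta>_def by auto
qed

lemma parsevalU: "((ip x (U 0))^2 + (ip x (U 1))^2 + (ip x (U 4))^2 + (ip x (U 5))^2)/2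
   + ((ip x (U 2))^2 + (ip x (U 3))^2)/8 = ip x x"
proof -
  have r: "r0*r0 + r2*r2 = 4" using r0sq r2sq dsum by simp
  define p where "p = x 0 + x 1"
  define q where "q = x 2 + x 3"
  have i: "ip x (U 0) = x 4 + x 5" "ip x (U 1) = x 4 - x 5" "ip x (U 4) = x 0 - x 1"
    "ip x (U 5) = x 2 - x 3" "ip x (U 2) = r0 * p + r2 * q" "ip x (U 3) = r2 * p - r0 * q"
    "ip x x = x 0 * x 0 + x 1 * x 1 + x 2 * x 2 + x 3 * x 3 + x 4 * x 4 + x 5 * x 5"
    unfolding ip_def sum6 p_def q_def by (simp_all add: U_def Defs.vec_of_list_def algebra_simps)
  have "(r0 * p + r2 * q)^2 + (r2 * p - r0 * q)^2 = (p^2 + q^2) * (r0*r0 + r2*r2)"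
    by (simp add: algebra_simps power2_eq_square)
  then have k: "(r0 * p + r2 * q)^2 + (r2 * p - r0 * q)^2 = (p^2 + q^2) * 4" using r by simp
  show ?thesis unfolding i k unfolding p_def q_def by (simp add: power2_eq_square field_simps; (simp add: algebra_simps)?)
qed

lemma ipU: "ip (U 0) (U 0) = 2" "ip (U 2) (U 2) = 8" "ip (U 3) (U 3) = 8"
  using r0sq r2sq dsum unfolding ip_def sum6 by (simp_all add: U_def Defs.vec_of_list_def algebra_simps)

lemma main_spec:
  assumes eb: "sorted_orthonormal_eigenbasis (normA t1 tc ts) lam v"
  shows "lam 0 = 1 \<and> lam 1 = 1 \<and> lam 2 = mus \<and> sin_theta_frob 3 v v_hat = 0"
proof -
  have orth: "\<forall>k<6. \<forall>l<6. (\<Sum>i<6. v k i * v l i) = (if k = l then 1 else 0)"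
    and eig: "\<And>k i. k < 6 \<Longrightarrow> i < 6 \<Longrightarrow> (\<Sum>j<6. N i j * v k j) = lam k * v k i"
    and srt: "\<And>k. k < 5 \<Longrightarrow> lam (Suc k) \<le> lam k"
    using eb unfolding sorted_orthonormal_eigenbasis_def N_def by auto
  define c where "c k j = ip (v k) (U j)" for k j
  have unit: "ip (v k) (v k) = 1" if "k < 6" for k using orth that unfolding ip_def by auto
  have Z0: "c k 0 = 0" if "k < 6" "lam k \<noteq> 1" for k
    unfolding c_def by (rule sym_orth[OF Nsym _ eig0]) (use eig that in auto)
  have Z1: "c k 1 = 0" if "k < 6" "lam k \<noteq> 0" for k
    unfolding c_def by (rule sym_orth[OF Nsym _ eig1]) (use eig that in auto)
  have Z2: "c k 2 = 0" if "k < 6" "lam k \<noteq> 1" for k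
    unfolding c_def by (rule sym_orth[OF Nsym _ eig2]) (use eig that in auto)
  have Z3: "c k 3 = 0" if "k < 6" "lam k \<noteq> mus" for k
    unfolding c_def by (rule sym_orth[OF Nsym _ eig3]) (use eig that in auto)
  have Z45: "c k 4 = 0 \<and> c k 5 = 0" if "k < 6" "mus \<le> lam k" for k
  proof -
    have "v k 0 - v k 1 = 0" "v k 2 - v k 3 = 0"
      using anti_zero[of "v k" "lam k"] eig that by auto
    then show ?thesis unfolding c_def ip_def sum6 by (simp add: U_def Defs.vec_of_list_def)
  qed
  have R: "((c k 0)^2 + (c k 1)^2 + (c k 4)^2 + (c k 5)^2)/2 + ((c k 2)^2 + (c k 3)^2)/8 = 1"
    if "k < 6" for k
    using parsevalU[of "v k"] unit[OF that] unfolding c_def by simp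
  have col: "(\<Sum>k<6. (c k j)^2) = ip (U j) (U j)" for j
    unfolding c_def using parseval6[OF orth] .
  note mus_pos mus_lt1
  have le1: "lam k \<le> 1" if "k < 6" for k
  proof (rule ccontr)
    assume "\<not> lam k \<le> 1"
    then have g: "lam k > 1" by simp
    then have n1: "lam k \<noteq> 1" and n0: "lam k \<noteq> 0" and n3: "lam k \<noteq> mus" and n4: "mus \<le> lam k"
      using mus_lt1 by auto
    have "c k 0 = 0" "c k 1 = 0" "c k 2 = 0" "c k 3 = 0" "c k 4 = 0" "c k 5 = 0"
      using Z0[OF that n1] Z1[OF that n0] Z2[OF that n1] Z3[OF that n3] Z45[OF that n4] by auto
    then show False using R[OF that] by simp
  qed
  have term1: "(c k 0)^2/2 + (c k 2)^2/8 = (if lam k = 1 then 1 else 0)" if "k < 6" for k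
  proof (cases "lam k = 1")
    case True
    then have "c k 1 = 0" "c k 3 = 0" "c k 4 = 0" "c k 5 = 0"
      using Z1 Z3 Z45 that mus_lt1 by auto
    then show ?thesis using R[OF that] True by simp
  next
    case False
    then show ?thesis using Z0 Z2 that by simp
  qed
  have cnt1: "(\<Sum>k<6. (if lam k = 1 then 1 else 0::real)) = 2"
  proof -
    have "(\<Sum>k<6. (if lam k = 1 then 1 else 0::real)) = (\<Sum>k<6. (c k 0)^2/2 + (c k 2)^2/8)"
      using term1 by (intro sum.cong) auto
    also have "\<dots> = (\<Sum>k<6. (c k 0)^2)/2 + (\<Sum>k<6. (c k 2)^2)/8"
      by (simp add: sum.distrib sum_divide_distrib)
    also have "\<dots> = 2" using col[of 0] col[of 2] ipU by simp
    finally show ?thesis .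
  qed
  have term3: "(c k 3)^2/8 = (if lam k = mus then 1 else 0)" if "k < 6" for k
  proof (cases "lam k = mus")
    case True
    then have "c k 0 = 0" "c k 1 = 0" "c k 2 = 0" "c k 4 = 0" "c k 5 = 0"
      using Z0 Z1 Z2 Z45 that mus_lt1 mus_pos by auto
    then show ?thesis using R[OF that] True by simp
  next
    case False
    then show ?thesis using Z3 that by simp
  qed
  have cnt3: "(\<Sum>k<6. (if lam k = mus then 1 else 0::real)) = 1"
  proof -
    have "(\<Sum>k<6. (if lam k = mus then 1 else 0::real)) = (\<Sum>k<6. (c k 3)^2/8)"
      using term3 by (intro sum.cong) auto
    also have "\<dots> = (\<Sum>k<6. (c k 3)^2)/8"
      by (simp add: sum_divide_distrib)
    also have "\<dots> = 1" using col[of 3] ipU by simp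
    finally show ?thesis .
  qed
  have ch: "lam 5 \<le> lam 4" "lam 4 \<le> lam 3" "lam 3 \<le> lam 2" "lam 2 \<le> lam 1" "lam 1 \<le> lam 0"
    using srt[of 4] srt[of 3] srt[of 2] srt[of 1] srt[of 0] by (simp_all add: eval_nat_numeral)
  have l0: "lam 0 \<le> 1" using le1[of 0] by simp
  have L01: "lam 0 = 1 \<and> lam 1 = 1 \<and> lam 2 \<noteq> 1"
    using cnt1 ch l0 unfolding sum6 by (auto split: if_splits)
  have L2: "lam 2 = mus"
  proof (rule ccontr)
    assume ne: "lam 2 \<noteq> mus"
    show False
    proof (cases "lam 2 > mus")
      case True
      have "lam 2 < 1" using L01 le1[of 2] by simp
      then have "c 2 0 = 0" "c 2 1 = 0" "c 2 2 = 0" "c 2 3 = 0" "c 2 4 = 0" "c 2 5 = 0"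
        using Z0[of 2] Z1[of 2] Z2[of 2] Z3[of 2] Z45[of 2] True ne mus_pos by auto
      then show False using R[of 2] by simp
    next
      case False
      then have "lam 2 < mus" using ne by simp
      then have "lam 3 < mus" "lam 4 < mus" "lam 5 < mus" using ch by auto
      then show False using cnt3 L01 mus_lt1 \<open>lam 2 < mus\<close> unfolding sum6 by auto
    qed
  qed
  have high: "c a 0 = 0 \<and> c a 2 = 0 \<and> c a 3 = 0" if "3 \<le> a" "a < 6" for a
  proof -
    have "a = 3 \<or> a = 4 \<or> a = 5" using that by auto
    then have "lam a \<le> lam 2" using ch by (elim disjE) auto
    then have lt: "lam a < 1" using L2 mus_lt1 by simp
    have "lam a \<noteq> mus"
    proof
      assume h: "lam a = mus"
      have "a = 3 \<or> a = 4 \<or> a = 5" using that by auto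
      then show False using cnt3 L01 L2 h mus_lt1 unfolding sum6 by (auto split: if_splits)
    qed
    then show ?thesis using Z0 Z2 Z3 lt that by auto
  qed
  have orthhat: "ip (v a) (v_hat b) = 0" if "3 \<le> a" "a < 6" "b < 3" for a b
  proof -
    from high[OF that(1,2)] have h0: "c a 0 = 0" and h2: "c a 2 = 0" and h3: "c a 3 = 0" by auto
    define p where "p = v a 0 + v a 1"
    define q where "q = v a 2 + v a 3"
    have e2: "r0 * p + r2 * q = 0" using h2 unfolding c_def ip_def sum6 p_def q_def
      by (simp add: U_def Defs.vec_of_list_def algebra_simps)
    have e3: "r2 * p - r0 * q = 0" using h3 unfolding c_def ip_def sum6 p_def q_def
      by (simp add: U_def Defs.vec_of_list_def algebra_simps)
    have r: "r0*r0 + r2*r2 = 4" using r0sq r2sq dsum by simp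
    have "(r0*r0 + r2*r2) * p = r0 * (r0 * p + r2 * q) + r2 * (r2 * p - r0 * q)" by (simp add: algebra_simps)
    then have p0: "p = 0" using e2 e3 r by simp
    have "(r0*r0 + r2*r2) * q = r2 * (r0 * p + r2 * q) - r0 * (r2 * p - r0 * q)" by (simp add: algebra_simps)
    then have q0: "q = 0" using e2 e3 r by simp
    have "v a 4 + v a 5 = 0" using h0 unfolding c_def ip_def sum6 by (simp add: U_def Defs.vec_of_list_def)
    then have z: "v a 5 = - v a 4" "v a 1 = - v a 0" "v a 3 = - v a 2" using p0 q0 unfolding p_def q_def
      by linarith+
    have z2: "v a (Suc 0) = - v a 0" using z(2) by simp
    have "b = 0 \<or> b = 1 \<or> b = 2" using that by auto
    then show ?thesis unfolding ip_def sum6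
      by (elim disjE) (simp_all add: z z2 v_hat_def Defs.vec_of_list_def)
  qed
  have vh: "ip (v_hat b) (v_hat b) > 0" "vnorm6 (v_hat b) = sqrt (ip (v_hat b) (v_hat b))" if "b < 3" for b
  proof -
    show "vnorm6 (v_hat b) = sqrt (ip (v_hat b) (v_hat b))"
      unfolding vnorm6_def ip_def by (simp add: power2_eq_square)
    have "b = 0 \<or> b = 1 \<or> b = 2" using that by auto
    then show "ip (v_hat b) (v_hat b) > 0"
      unfolding ip_def sum6 by (auto simp: v_hat_def Defs.vec_of_list_def)
  qed
  have perb: "(\<Sum>a<3. ((\<Sum>i<6. v a i * v_hat b i) / vnorm6 (v_hat b))^2) = 1" if "b < 3" for b
  proof -
    have "(\<Sum>a<3. ((\<Sum>i<6. v a i * v_hat b i) / vnorm6 (v_hat b))^2)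
        = (\<Sum>a<3. (ip (v a) (v_hat b))^2) / ip (v_hat b) (v_hat b)"
      using vh[OF that] unfolding ip_def[symmetric]
      by (simp add: power_divide sum_divide_distrib)
    also have "(\<Sum>a<3. (ip (v a) (v_hat b))^2) = (\<Sum>a<6. (ip (v a) (v_hat b))^2)"
    proof -
      have "(\<Sum>a<6. (ip (v a) (v_hat b))^2) = (\<Sum>a<3. (ip (v a) (v_hat b))^2) + (\<Sum>a=3..<6. (ip (v a) (v_hat b))^2)"
        by (simp add: eval_nat_numeral)
      also have "(\<Sum>a=3..<6. (ip (v a) (v_hat b))^2) = 0"
        using orthhat that by (intro sum.neutral) auto
      finally show ?thesis by simp
    qed
    also have "\<dots> = ip (v_hat b) (v_hat b)" using parseval6[OF orth] .
    finally show ?thesis using vh[OF that] by simp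
  qed
  have "(\<Sum>a<3. \<Sum>b<3. ((\<Sum>i<6. v a i * v_hat b i) / vnorm6 (v_hat b))^2) = 3"
  proof -
    have "(\<Sum>a<3. \<Sum>b<3. ((\<Sum>i<6. v a i * v_hat b i) / vnorm6 (v_hat b))^2)
        = (\<Sum>b<3. \<Sum>a<3. ((\<Sum>i<6. v a i * v_hat b i) / vnorm6 (v_hat b))^2)"
      by (rule sum.swap)
    also have "\<dots> = (\<Sum>b<(3::nat). 1)" using perb by (intro sum.cong) auto
    finally show ?thesis by simp
  qed
  then have "sin_theta_frob 3 v v_hat = 0" unfolding sin_theta_frob_def by simp
  then show ?thesis using L01 L2 by simp
qed

end

lemma thm6_aux:
  fixes t1 tc ts :: real and lam :: "nat \<Rightarrow> real" and v :: "nat \<Rightarrow> nat \<Rightarrow> real"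
  assumes H: "tc / t1 < 1/100 \<and> tc / t1 > ts / t1 \<and> ts / t1 > 0 \<and>
       4/9 * tc \<le> ts \<and> ts \<le> tc \<and> t1 + tc + ts = 1 \<and>
       sorted_orthonormal_eigenbasis (normA t1 tc ts) lam v"
  shows "(\<forall>k<3. \<bar>lam k - lam_hat t1 tc k\<bar> \<le> 100 * (tc / t1)^2) \<and>
         sin_theta_frob 3 v v_hat \<le> 100 * (tc / t1)"
proof -
  from H have h1: "tc / t1 < 1/100" and h2: "tc / t1 > ts / t1" and h3: "ts / t1 > 0"
    and h4: "4/9 * tc \<le> ts" and h5: "ts \<le> tc" and h6: "t1 + tc + ts = 1"
    and eb: "sorted_orthonormal_eigenbasis (normA t1 tc ts) lam v" by auto
  have t1p: "t1 > 0"
  proof (rule ccontr)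
    assume "\<not> t1 > 0"
    then have "t1 < 0" using h3 by (cases "t1 = 0") auto
    then have "ts < 0" using h3 by (simp add: zero_less_divide_iff)
    moreover have "tc < ts" using h2 \<open>t1 < 0\<close> by (simp add: divide_less_cancel)
    ultimately show False using h5 by simp
  qed
  have tsp: "ts > 0" using h3 t1p by (simp add: zero_less_divide_iff)
  have tcp: "tc > 0" using h5 tsp by simp
  have t1le: "t1 < 1" using h6 tsp tcp by simp
  define e where "e = tc / t1"
  have ce: "tc \<le> e" unfolding e_def using t1p t1le tcp by (simp add: le_divide_eq)
  have c1: "tc < 1/100" using ce h1 unfolding e_def by linarith
  have ep: "e > 0" unfolding e_def using tcp t1p by simp
  have M: "lam 0 = 1 \<and> lam 1 = 1 \<and> lam 2 = mus t1 tc ts \<and> sin_theta_frob 3 v v_hat = 0"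
    using main_spec[OF t1p tcp tsp h6 c1 h4 h5 eb] .
  have mc: "mus t1 tc ts = 3*(1-2*tc)^2/(3+4*tc-4*tc^2)"
    using mus_closed[OF t1p tcp tsp h6 c1 h4 h5] .
  have mb: "\<bar>mus t1 tc ts - (1 - 16/3*tc)\<bar> \<le> 13*tc^2" using mus_bounds(3)[OF tcp c1] mc by simp
  have ediff: "e - tc \<le> 2 * e^2" and ediff0: "0 \<le> e - tc"
  proof -
    have "e - tc = (tc - tc*t1) / t1" unfolding e_def using t1p by (simp add: field_simps)
    moreover have "tc - tc*t1 = tc*(tc+ts)"
    proof -
      have "1 - t1 = tc + ts" using h6 by simp
      then show ?thesis by (metis right_diff_distrib mult_1_right)
    qed
    ultimately have "e - tc = tc * (tc + ts) / t1" by simp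
    also have "\<dots> \<le> tc * (2*tc) / t1" using h5 tcp t1p
      by (intro divide_right_mono mult_left_mono) auto
    also have "\<dots> \<le> 2 * e^2"
    proof -
      have "tc * (2*tc) / t1 = 2 * e * tc" unfolding e_def by simp
      also have "\<dots> \<le> 2 * e * e" using ce ep by simp
      finally show ?thesis by (simp add: power2_eq_square)
    qed
    finally show "e - tc \<le> 2 * e^2" .
    show "0 \<le> e - tc" using ce by simp
  qed
  have tc2: "tc^2 \<le> e^2" using ce tcp by (simp add: power_mono)
  have A: "\<forall>k<3. \<bar>lam k - lam_hat t1 tc k\<bar> \<le> 100 * (tc / t1)^2"
  proof (intro allI impI)
    fix k :: nat assume k: "k < 3"
    have "0 \<le> 100 * e^2" by simp
    moreover have "\<bar>lam 2 - lam_hat t1 tc 2\<bar> \<le> 100 * e^2"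
    proof -
      have "lam 2 - lam_hat t1 tc 2 = (mus t1 tc ts - (1 - 16/3*tc)) + 16/3 * (e - tc)"
        using M t1p unfolding lam_hat_def e_def by (simp add: field_simps)
      then have "\<bar>lam 2 - lam_hat t1 tc 2\<bar> \<le> \<bar>mus t1 tc ts - (1 - 16/3*tc)\<bar> + \<bar>16/3 * (e - tc)\<bar>"
        by (metis abs_triangle_ineq)
      also have "\<dots> \<le> 13*tc^2 + 16/3 * (2*e^2)"
      proof -
        have "\<bar>16/3 * (e - tc)\<bar> = 16/3 * (e - tc)" using ediff0 by simp
        moreover have "16/3 * (e - tc) \<le> 16/3 * (2*e^2)" using ediff by (intro mult_left_mono) auto
        ultimately show ?thesis using mb by linarith
      qed
      finally have "\<bar>lam 2 - lam_hat t1 tc 2\<bar> \<le> 13*tc^2 + 16/3 * (2*e^2)" .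
      then show ?thesis using tc2 by linarith
    qed
    ultimately show "\<bar>lam k - lam_hat t1 tc k\<bar> \<le> 100 * (tc / t1)^2"
    proof -
      have "k = 0 \<or> k = 1 \<or> k = 2" using k by auto
      then show ?thesis using M \<open>0 \<le> 100 * e^2\<close> \<open>\<bar>lam 2 - lam_hat t1 tc 2\<bar> \<le> 100 * e^2\<close>
        unfolding e_def lam_hat_def by (elim disjE) auto
    qed
  qed
  have B: "sin_theta_frob 3 v v_hat \<le> 100 * (tc / t1)" using M ep unfolding e_def by simp
  show ?thesis using A B by blast
qed

theorem theorem6:
  shows "\<exists>C \<delta>. C > 0 \<and> \<delta> > 0 \<and>
    (\<forall>t1 tc ts :: real. \<forall>lam v.
       tc / t1 < \<delta> \<and> tc / t1 > ts / t1 \<and> ts / t1 > 0 \<and>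
       4/9 * tc \<le> ts \<and> ts \<le> tc \<and> t1 + tc + ts = 1 \<and>
       sorted_orthonormal_eigenbasis (normA t1 tc ts) lam v \<longrightarrow>
         (\<forall>k<3. \<bar>lam k - lam_hat t1 tc k\<bar> \<le> C * (tc / t1)^2) \<and>
         sin_theta_frob 3 v v_hat \<le> C * (tc / t1))"
  apply (rule exI[of _ 100])
  apply (rule exI[of _ "1/100"])
  apply (intro conjI)
    apply simp
   apply simp
  using thm6_aux by blast

end
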